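(* In the setting below, for an integer $t \geq 1$, if $\eta \geq \eta_0$ and $|\tilde{w}_t| \leq \frac{1}{2}\gamma\hat{w}_t$, then $F(w_t) \leq 1/(8\eta)$.
   Context: Dimension $d=2$. Data $x_1,\dots,x_n\in\mathbb{R}^2$ with $\|x_i\|\le 1$, linearly separable (some $w$ has $\langle w,x_i\rangle>0$ for all $i$). $F(w) = \frac{1}{n}\sum_{i=1}^n \log(1+\exp(-\langle w, x_i\rangle))$. Maximum margin $\gamma = \max_{\|w\|=1}\min_i \langle w, x_i\rangle$ with maximizer the unit vector $w_*$; $v_*$ is a fixed unit vector orthogonal to $w_*$. Gradient descent: $w_0=0$, $w_{t+1} = w_t - \eta\nabla F(w_t)$ with constant $\eta>0$. $\hat{w}_t = \langle w_t, w_*\rangle$, $\tilde{w}_t = \langle w_t, v_*\rangle$. $\eta_0 = \max(n, \frac{32}{\gamma^2}\log\frac{256}{\gamma^2})$. *)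

theory Defs
  imports "HOL-Analysis.Analysis"
begin

definition logloss :: "nat \<Rightarrow> (nat \<Rightarrow> real^2) \<Rightarrow> real^2 \<Rightarrow> real" where
  "logloss n x w = (1 / real n) * (\<Sum>i<n. ln (1 + exp (- (w \<bullet> x i))))"

definition logloss_grad :: "nat \<Rightarrow> (nat \<Rightarrow> real^2) \<Rightarrow> real^2 \<Rightarrow> real^2" where
  "logloss_grad n x w = (1 / real n) *\<^sub>R (\<Sum>i<n. (- 1 / (1 + exp (w \<bullet> x i))) *\<^sub>R x i)"

primrec gd :: "nat \<Rightarrow> (nat \<Rightarrow> real^2) \<Rightarrow> real \<Rightarrow> nat \<Rightarrow> real^2" where
  "gd n x \<eta> 0 = 0"
| "gd n x \<eta> (Suc t) = gd n x \<eta> t - \<eta> *\<^sub>R logloss_grad n x (gd n x \<eta> t)"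

definition margin :: "nat \<Rightarrow> (nat \<Rightarrow> real^2) \<Rightarrow> real^2 \<Rightarrow> real" where
  "margin n x w = Min ((\<lambda>i. w \<bullet> x i) ` {..<n})"

definition max_margin :: "nat \<Rightarrow> (nat \<Rightarrow> real^2) \<Rightarrow> real" where
  "max_margin n x = (SUP w \<in> sphere 0 1. margin n x w)"

definition eta0 :: "nat \<Rightarrow> real \<Rightarrow> real" where
  "eta0 n \<gamma> = max (real n) (32 / \<gamma>\<^sup>2 * ln (256 / \<gamma>\<^sup>2))"

end

theory Submission
  imports Defs
begin

lemma orth2:
  fixes a b c d :: real
  assumes "a^2+b^2=1" "c^2+d^2=1" "a*c+b*d=0"
  shows "a^2+c^2=1 \<and> b^2+d^2=1 \<and> a*b+c*d=0"
proof -
  define k where "k = a*d-b*c"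
  have c: "c = -b*k"
  proof -
    have "c = c*(a^2+b^2)" using assms(1) by simp
    also have "\<dots> = a*(a*c+b*d) - b*k" unfolding k_def by (simp add: power2_eq_square algebra_simps)
    finally show ?thesis using assms(3) by simp
  qed
  have d: "d = a*k"
  proof -
    have "d = d*(a^2+b^2)" using assms(1) by simp
    also have "\<dots> = b*(a*c+b*d) + a*k" unfolding k_def by (simp add: power2_eq_square algebra_simps)
    finally show ?thesis using assms(3) by simp
  qed
  have "(a^2+b^2)*k^2 = 1" using assms(2) unfolding c d
    by (simp add: power_mult_distrib algebra_simps)
  hence "k^2 = 1" using assms(1) by simp
  hence k: "k^2 = 1" .
  have 1: "a^2+c^2 = a^2+b^2*k^2" unfolding c by (simp add: power_mult_distrib)
  have 2: "b^2+d^2 = b^2+a^2*k^2" unfolding d by (simp add: power_mult_distrib)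
  have 3: "a*b+c*d = a*b*(1-k^2)" unfolding c d by (simp add: power2_eq_square algebra_simps)
  show ?thesis using 1 2 3 k assms(1) by simp
qed

lemma decomp2:
  fixes u v y z :: "real^2"
  assumes "norm u = 1" "norm v = 1" "v \<bullet> u = 0"
  shows "z \<bullet> y = (z \<bullet> u) * (u \<bullet> y) + (z \<bullet> v) * (v \<bullet> y)"
proof -
  have n: "u \<bullet> u = 1" "v \<bullet> v = 1" using assms by (simp_all add: norm_eq_1)
  have o: "((u$1))^2+((u$2))^2=1" "((v$1))^2+((v$2))^2=1" "(u$1)*(v$1)+(u$2)*(v$2)=0"
    using n assms(3) by (auto simp: inner_vec_def sum_2 power2_eq_square mult.commute)
  from orth2[OF o] have h: "((u$1))^2+((v$1))^2=1" "((u$2))^2+((v$2))^2=1" "(u$1)*(u$2)+(v$1)*(v$2)=0" by auto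
  have "z \<bullet> y = (z$1)*(y$1) + (z$2)*(y$2)" by (simp add: inner_vec_def sum_2)
  also have "\<dots> = (z$1)*(y$1)*(((u$1))^2+((v$1))^2) + (z$2)*(y$2)*(((u$2))^2+((v$2))^2)
     + ((z$1)*(y$2) + (z$2)*(y$1))*((u$1)*(u$2)+(v$1)*(v$2))" using h by simp
  also have "\<dots> = (z \<bullet> u) * (u \<bullet> y) + (z \<bullet> v) * (v \<bullet> y)"
    by (simp add: inner_vec_def sum_2 power2_eq_square algebra_simps)
  finally show ?thesis .
qed

lemma numeric_bound:
  fixes g eta :: real
  assumes g0: "0 < g" and g1: "g \<le> 1" and e0: "eta > 0"
    and e: "eta \<ge> 32 / g^2 * ln (256 / g^2)"
  shows "exp (- (eta * g^2 / 4)) \<le> 1 / (8 * eta)"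
proof -
  define a where "a = g^2/4"
  have a0: "a > 0" using g0 unfolding a_def by simp
  have a1: "a \<le> 1/4" using g0 g1 unfolding a_def by (simp add: power_le_one)
  define L where "L = ln (64 / a)"
  have e1: "32 / g^2 = 8 / a" unfolding a_def by simp
  have e2: "256 / g^2 = 64 / a" unfolding a_def by simp
  have eL: "eta \<ge> 8 / a * L" using e unfolding L_def by (simp only: e1 e2)
  define u where "u = a * eta"
  have u0: "u > 0" using a0 e0 unfolding u_def by simp
  have L0: "L \<ge> 0" unfolding L_def using a0 a1 by (simp add: field_simps)
  have uL: "u \<ge> 8 * L" using eL a0 unfolding u_def by (simp add: field_simps)
  have lnu: "ln u \<le> u / 2"
  proof -
    have "ln (u/2) \<le> u/2 - 1" using u0 by (intro ln_le_minus_one) simp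
    moreover have "ln (u/2) = ln u - ln 2" using u0 by (simp add: ln_div)
    moreover have "ln (2::real) \<le> 1" using ln_le_minus_one[of 2] by simp
    ultimately show ?thesis by simp
  qed
  have "ln (8 * eta) = ln 8 + ln u - ln a"
    unfolding u_def using a0 e0 by (simp add: ln_mult ln_div)
  also have "ln 8 - ln a \<le> L" unfolding L_def using a0
    by (simp add: ln_div ln_mono)
  hence "ln 8 + ln u - ln a \<le> u" using lnu uL L0 by simp
  finally have "ln (8*eta) \<le> u" .
  hence "8 * eta \<le> exp u" using e0 by (metis exp_ln exp_le_cancel_iff mult_pos_pos zero_less_numeral)
  moreover have "exp (- (eta * g^2 / 4)) = 1 / exp u" unfolding u_def a_def
    by (simp add: exp_minus field_simps)
  moreover have "1 / exp u \<le> 1 / (8 * eta)"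
    using \<open>8 * eta \<le> exp u\<close> e0 by (intro divide_left_mono) auto
  ultimately show ?thesis by simp
qed

theorem lemma13:
  fixes n :: nat and x :: "nat \<Rightarrow> real^2" and \<eta> :: real
    and w_star v_star :: "real^2" and t :: nat
  assumes n_pos: "n \<ge> 1"
    and bounded: "\<And>i. i < n \<Longrightarrow> norm (x i) \<le> 1"
    and separable: "\<exists>w. \<forall>i<n. w \<bullet> x i > 0"
    and w_star_unit: "norm w_star = 1"
    and w_star_max: "margin n x w_star = max_margin n x"
    and v_star_unit: "norm v_star = 1"
    and v_star_orth: "v_star \<bullet> w_star = 0"
    and eta_pos: "\<eta> > 0"
    and t_pos: "t \<ge> 1"
    and eta_large: "\<eta> \<ge> eta0 n (max_margin n x)"
    and cond: "\<bar>gd n x \<eta> t \<bullet> v_star\<bar> \<le> (1/2) * max_margin n x * (gd n x \<eta> t \<bullet> w_star)"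
  shows "logloss n x (gd n x \<eta> t) \<le> 1 / (8 * \<eta>)"
proof -
  define g where "g = max_margin n x"
  define W where "W = gd n x \<eta>"
  have fin: "finite ((\<lambda>i. w_star \<bullet> x i) ` {..<n})" by simp
  have mi: "g \<le> w_star \<bullet> x i" if "i < n" for i
  proof -
    have "Min ((\<lambda>i. w_star \<bullet> x i) ` {..<n}) \<le> w_star \<bullet> x i" by (rule Min_le) (auto simp: that)
    thus ?thesis using w_star_max unfolding g_def margin_def by simp
  qed
  have x0: "x 0 \<bullet> y \<le> 1" if "norm y = 1" for y
  proof -
    have "norm (x 0) \<le> 1" using bounded n_pos by simp
    thus ?thesis using norm_cauchy_schwarz[of "x 0" y] that by simp
  qed
  have g1: "g \<le> 1" using mi[of 0] x0[OF w_star_unit] n_pos by (simp add: inner_commute)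
  have g0: "g > 0"
  proof -
    obtain w where w: "\<forall>i<n. w \<bullet> x i > 0" using separable by blast
    have wn: "w \<noteq> 0" using w n_pos by (metis inner_zero_left less_irrefl less_le_trans zero_less_one)
    define u where "u = w /\<^sub>R norm w"
    have us: "u \<in> sphere 0 1" unfolding u_def using wn by simp
    have "margin n x u > 0" unfolding margin_def
      using n_pos w wn by (subst Min_gr_iff) (auto simp: u_def lessThan_empty_iff)
    moreover have "bdd_above (margin n x ` sphere 0 1)"
    proof (rule bdd_aboveI2)
      fix v :: "real^2" assume "v \<in> sphere 0 1"
      hence "norm v = 1" by simp
      have "margin n x v \<le> v \<bullet> x 0" unfolding margin_def using n_pos by (intro Min_le) auto
      also have "\<dots> \<le> 1" using x0[OF \<open>norm v = 1\<close>] by (simp add: inner_commute)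
      finally show "margin n x v \<le> 1" .
    qed
    ultimately show ?thesis unfolding g_def max_margin_def
      using cSUP_upper[OF us] by (meson less_le_trans)
  qed
  have step: "W (Suc s) \<bullet> w_star = W s \<bullet> w_star
      + \<eta> / real n * (\<Sum>i<n. (x i \<bullet> w_star) / (1 + exp (W s \<bullet> x i)))" for s
  proof -
    have "logloss_grad n x (W s) \<bullet> w_star = - (1 / real n) * (\<Sum>i<n. (x i \<bullet> w_star) / (1 + exp (W s \<bullet> x i)))"
      unfolding logloss_grad_def inner_scaleR_left inner_sum_left
      by (simp add: sum_negf[symmetric] sum_distrib_left)
    thus ?thesis unfolding W_def by (simp add: inner_diff_left)
  qed
  have termpos: "(\<Sum>i<n. (x i \<bullet> w_star) / (1 + exp (W s \<bullet> x i))) \<ge> 0" for s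
    using mi g0 by (intro sum_nonneg divide_nonneg_pos) (auto simp: inner_commute add_pos_pos
        intro: order.trans[OF less_imp_le[OF g0]])
  have mono: "W (Suc s) \<bullet> w_star \<ge> W s \<bullet> w_star" for s
    using step[of s] termpos[of s] eta_pos n_pos by simp
  have first: "W 1 \<bullet> w_star \<ge> \<eta> * g / 2"
  proof -
    have "(\<Sum>i<n. (x i \<bullet> w_star) / (1 + exp (W 0 \<bullet> x i))) \<ge> (\<Sum>i<n. g / 2)"
      using mi by (intro sum_mono) (auto simp: W_def inner_commute)
    hence "(\<Sum>i<n. (x i \<bullet> w_star) / (1 + exp (W 0 \<bullet> x i))) \<ge> real n * g / 2" by simp
    hence "\<eta> / real n * (\<Sum>i<n. (x i \<bullet> w_star) / (1 + exp (W 0 \<bullet> x i)))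
        \<ge> \<eta> / real n * (real n * g / 2)" using eta_pos n_pos
      by (intro mult_left_mono) auto
    moreover have "\<eta> / real n * (real n * g / 2) = \<eta> * g / 2" using n_pos by simp
    ultimately show ?thesis using step[of 0] by (simp add: W_def)
  qed
  have hat: "W s \<bullet> w_star \<ge> \<eta> * g / 2" if "s \<ge> 1" for s
    using that
  proof (induction s rule: dec_induct)
    case base show ?case using first .
  next
    case (step s) thus ?case using mono[of s] by simp
  qed
  define wh where "wh = W t \<bullet> w_star"
  define wt where "wt = W t \<bullet> v_star"
  have wh: "wh \<ge> \<eta> * g / 2" unfolding wh_def using hat t_pos by simp
  have c: "\<bar>wt\<bar> \<le> g / 2 * wh" using cond unfolding wt_def wh_def W_def g_def by simp
  have marg: "W t \<bullet> x i \<ge> \<eta> * g^2 / 4" if i: "i < n" for i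
  proof -
    have dec: "W t \<bullet> x i = wh * (w_star \<bullet> x i) + wt * (v_star \<bullet> x i)"
      unfolding wh_def wt_def by (rule decomp2[OF w_star_unit v_star_unit v_star_orth])
    have vb: "\<bar>v_star \<bullet> x i\<bar> \<le> 1"
      using Cauchy_Schwarz_ineq2[of v_star "x i"] bounded[OF i] v_star_unit by simp
    have "\<bar>wt * (v_star \<bullet> x i)\<bar> \<le> \<bar>wt\<bar>"
      using vb by (simp add: abs_mult mult_left_le)
    hence t2: "wt * (v_star \<bullet> x i) \<ge> - (g / 2 * wh)" using c by linarith
    have wh0: "wh \<ge> 0" using wh eta_pos g0 by (smt (verit) mult_pos_pos half_gt_zero)
    have t1: "wh * (w_star \<bullet> x i) \<ge> wh * g" using mi[OF i] wh0 by (simp add: mult_left_mono)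
    have "W t \<bullet> x i \<ge> g / 2 * wh" using dec t1 t2 by (simp add: algebra_simps)
    moreover have "g / 2 * wh \<ge> g / 2 * (\<eta> * g / 2)" using wh g0 by (intro mult_left_mono) auto
    ultimately show ?thesis by (simp add: power2_eq_square)
  qed
  have "logloss n x (W t) \<le> (1 / real n) * (\<Sum>i<n. exp (- (\<eta> * g^2 / 4)))"
    unfolding logloss_def
  proof (intro mult_left_mono sum_mono)
    fix i assume "i \<in> {..<n}"
    hence "W t \<bullet> x i \<ge> \<eta> * g^2 / 4" using marg by simp
    hence "exp (- (W t \<bullet> x i)) \<le> exp (- (\<eta> * g^2 / 4))" by simp
    moreover have "ln (1 + exp (- (W t \<bullet> x i))) \<le> exp (- (W t \<bullet> x i))"
      by (rule ln_add_one_self_le_self) simp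
    ultimately show "ln (1 + exp (- (W t \<bullet> x i))) \<le> exp (- (\<eta> * g^2 / 4))" by linarith
  qed simp
  also have "\<dots> = exp (- (\<eta> * g^2 / 4))" using n_pos by simp
  also have "\<dots> \<le> 1 / (8 * \<eta>)"
    using numeric_bound[OF g0 g1 eta_pos] eta_large unfolding eta0_def g_def by simp
  finally show ?thesis unfolding W_def .
qed

end
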